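(* Let $A$ be a bounded linear operator on a complex Hilbert space $\mathcal{H}$, and let $W(A) = \{\langle Ax, x\rangle : x \in \mathcal{H}, \|x\| = 1\}$ be its numerical range. Then \[ \|A^*A - AA^*\| \le 2\, S(W(A)), \] where $S(W(A))$ denotes the area (planar Lebesgue measure) of $W(A) \subset \mathbb{C}$. *)

theory Defs
  imports "HOL-Analysis.Analysis"
begin

text \<open>The distribution has no complex vector spaces / complex inner product spaces,
so we introduce them as a type class: a real normed vector space carrying a complex
scalar multiplication (compatible with the real one) and a complex inner product
(linear in the first argument, conjugate symmetric, positive definite) inducing the norm.\<close>

class complex_inner = real_normed_vector +
  fixes scaleC :: "complex \<Rightarrow> 'a \<Rightarrow> 'a"
    and cinner :: "'a \<Rightarrow> 'a \<Rightarrow> complex"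
  assumes scaleC_of_real: "scaleC (complex_of_real r) x = scaleR r x"
    and scaleC_add_right: "scaleC c (x + y) = scaleC c x + scaleC c y"
    and scaleC_add_left: "scaleC (c + d) x = scaleC c x + scaleC d x"
    and scaleC_scaleC: "scaleC c (scaleC d x) = scaleC (c * d) x"
    and scaleC_one: "scaleC 1 x = x"
    and cinner_add_left: "cinner (x + y) z = cinner x z + cinner y z"
    and cinner_scaleC_left: "cinner (scaleC c x) y = c * cinner x y"
    and cinner_commute: "cinner y x = cnj (cinner x y)"
    and cinner_self_real_nonneg: "Im (cinner x x) = 0 \<and> Re (cinner x x) \<ge> 0"
    and cinner_self_eq_zero: "cinner x x = 0 \<longleftrightarrow> x = 0"
    and norm_eq_sqrt_cinner: "norm x = sqrt (Re (cinner x x))"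

class complex_hilbert = complex_inner + complete_space

definition bounded_clinear_op :: "('a::complex_inner \<Rightarrow> 'a) \<Rightarrow> bool" where
  "bounded_clinear_op A \<longleftrightarrow>
     (\<forall>x y. A (x + y) = A x + A y) \<and>
     (\<forall>c x. A (scaleC c x) = scaleC c (A x)) \<and>
     (\<exists>K. \<forall>x. norm (A x) \<le> K * norm x)"

definition is_adjoint :: "('a::complex_inner \<Rightarrow> 'a) \<Rightarrow> ('a \<Rightarrow> 'a) \<Rightarrow> bool" where
  "is_adjoint A B \<longleftrightarrow> (\<forall>x y. cinner (A x) y = cinner x (B y))"

definition numerical_range :: "('a::complex_inner \<Rightarrow> 'a) \<Rightarrow> complex set" where
  "numerical_range A = {cinner (A x) x | x. norm x = 1}"

end

theory Submission
  imports Defs "HOL-Analysis.Analysis"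
begin

definition phi2 :: "real^2 \<Rightarrow> complex" where "phi2 v = Complex (v$1) (v$2)"
definition psi2 :: "complex \<Rightarrow> real^2" where "psi2 z = vector [Re z, Im z]"

lemma psi_phi[simp]: "psi2 (phi2 v) = v"
  unfolding phi2_def psi2_def by (simp add: vec_eq_iff forall_2 vector_2)
lemma phi_psi[simp]: "phi2 (psi2 z) = z"
  unfolding phi2_def psi2_def by (simp add: vector_2)

lemma cont_phi2: "continuous_on UNIV phi2"
  unfolding phi2_def Complex_eq by (intro continuous_intros)

lemma phi2_vimage_box: "phi2 -` box l u = box (psi2 l) (psi2 u)"
  by (auto simp: phi2_def psi2_def mem_box_cart forall_2 vector_2 mem_box Basis_complex_def)

lemma Basis_real2: "(Basis::(real^2) set) = {axis 1 1, axis 2 1}"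
  by (auto simp: Basis_vec_def UNIV_2)
lemma axis12_ne: "axis (1::2) (1::real) \<noteq> axis 2 1"
  by (simp add: axis_eq_axis)

lemma distr_phi2: "distr lborel borel phi2 = lborel"
proof (rule lborel_eqI[symmetric])
  show "sets (distr lborel borel phi2) = sets borel" by simp
  fix l u :: complex assume le: "\<And>b. b \<in> Basis \<Longrightarrow> l \<bullet> b \<le> u \<bullet> b"
  have m: "phi2 \<in> borel_measurable lborel"
    using cont_phi2 by (simp add: borel_measurable_continuous_onI)
  have "emeasure (distr lborel borel phi2) (box l u) = emeasure lborel (box (psi2 l) (psi2 u))"
    using m by (simp add: emeasure_distr phi2_vimage_box)
  also have "\<dots> = (\<Prod>b\<in>Basis. (u - l) \<bullet> b)"
    using le[of 1] le[of \<i>]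
    by (simp add: emeasure_lborel_box_eq Basis_real2 axis12_ne inner_axis Basis_complex_def
          psi2_def vector_2 field_simps)
  finally show "emeasure (distr lborel borel phi2) (box l u) = (\<Prod>b\<in>Basis. (u - l) \<bullet> b)" .
qed

lemma measure_phi2_image:
  assumes "compact K"
  shows "measure lebesgue (phi2 ` K) = measure lebesgue K"
proof -
  have cK: "compact (phi2 ` K)"
    using assms cont_phi2 by (meson compact_continuous_image continuous_on_subset subset_UNIV)
  have m: "phi2 \<in> borel_measurable lborel"
    using cont_phi2 by (simp add: borel_measurable_continuous_onI)
  have inj: "phi2 -` phi2 ` K = K"
    by (metis inj_on_def inj_vimage_image_eq psi_phi)
  have "measure lebesgue (phi2 ` K) = measure lborel (phi2 ` K)"
    using cK by (simp add: compact_imp_closed borel_closed)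
  also have "\<dots> = measure (distr lborel borel phi2) (phi2 ` K)"
    by (simp add: distr_phi2)
  also have "\<dots> = measure lborel K"
    using m cK by (simp add: measure_distr compact_imp_closed borel_closed inj)
  also have "\<dots> = measure lebesgue K"
    using assms by (simp add: compact_imp_closed borel_closed)
  finally show ?thesis .
qed

lemma para_measure:
  fixes c b z0 :: complex and h :: real
  assumes h: "h \<ge> 0"
  defines "P \<equiv> (\<lambda>\<eta>. z0 + (c*\<eta> + b*cnj \<eta>)) ` {\<eta>. \<bar>Re \<eta>\<bar> \<le> h \<and> \<bar>Im \<eta>\<bar> \<le> h}"
  shows "compact P" "measure lebesgue P = \<bar>(cmod c)^2 - (cmod b)^2\<bar> * (2*h)^2"
proof -
  define f where "f v = psi2 (c * phi2 v + b * cnj (phi2 v))" for v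
  have lin: "linear f"
    unfolding f_def
    by (rule linearI) (simp_all add: phi2_def psi2_def vec_eq_iff forall_2 vector_2 algebra_simps
        complex_eq_iff)
  define S where "S = cbox (vector [-h,-h]) (vector [h,h] :: real^2)"
  have S: "{\<eta>. \<bar>Re \<eta>\<bar> \<le> h \<and> \<bar>Im \<eta>\<bar> \<le> h} = phi2 ` S"
  proof (rule set_eqI, rule iffI)
    fix \<eta> assume "\<eta> \<in> {\<eta>. \<bar>Re \<eta>\<bar> \<le> h \<and> \<bar>Im \<eta>\<bar> \<le> h}"
    then have "psi2 \<eta> \<in> S" by (auto simp: S_def mem_box_cart forall_2 psi2_def vector_2)
    then show "\<eta> \<in> phi2 ` S" by (metis image_eqI phi_psi)
  qed (auto simp: S_def mem_box_cart forall_2 phi2_def vector_2)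
  have P: "P = (+) z0 ` (phi2 ` (f ` S))"
    unfolding P_def S image_image f_def by (simp add: o_def)
  have cS: "compact (f ` S)"
    using lin S_def by (simp add: compact_continuous_image linear_continuous_on linear_linear)
  show "compact P" unfolding P
    using cS cont_phi2 by (meson compact_continuous_image continuous_on_subset subset_UNIV compact_translation)
  have "measure lebesgue P = measure lebesgue (f ` S)"
    unfolding P measure_translation using cS by (rule measure_phi2_image)
  also have "\<dots> = \<bar>det (matrix f)\<bar> * measure lebesgue S"
    using lin by (simp add: measure_linear_image S_def)
  also have "det (matrix f) = (cmod c)^2 - (cmod b)^2"
    by (simp add: det_2 matrix_def f_def phi2_def psi2_def axis_def vector_2 cmod_def
        algebra_simps power2_eq_square)
  also have "measure lebesgue S = (2*h)^2"
  proof -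
    have "vector [0,0] \<in> S" using h by (simp add: S_def mem_box_cart forall_2 vector_2)
    then have "S \<noteq> {}" by blast
    then show ?thesis
      unfolding S_def by (simp add: content_cbox_cart UNIV_2 vector_2 power2_eq_square)
  qed
  finally show "measure lebesgue P = \<bar>(cmod c)^2 - (cmod b)^2\<bar> * (2*h)^2" .
qed

lemma cinner_add_right: "cinner x (y + z) = cinner x y + cinner x z"
  by (metis cinner_add_left cinner_commute complex_cnj_add)

lemma cinner_scaleC_right: "cinner x (scaleC c y) = cnj c * cinner x y"
  by (metis cinner_commute cinner_scaleC_left complex_cnj_mult complex_cnj_cnj)

lemma scaleC_zero_left[simp]: "scaleC 0 x = 0"
  using scaleC_of_real[of 0 x] by simp

lemma scaleC_minus1: "scaleC (-1) x = - x"
  using scaleC_of_real[of "-1" x] by simp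

lemma cinner_zero_left[simp]: "cinner 0 y = 0"
  using cinner_scaleC_left[of 0 0 y] by simp

lemma cinner_zero_right[simp]: "cinner x 0 = 0"
  using cinner_scaleC_right[of x 0 0] by simp

lemma cinner_minus_left: "cinner (- x) y = - cinner x y"
  using cinner_scaleC_left[of "-1" x y] by (simp add: scaleC_minus1)

lemma cinner_minus_right: "cinner x (- y) = - cinner x y"
  using cinner_scaleC_right[of x "-1" y] by (simp add: scaleC_minus1)

lemma cinner_diff_left: "cinner (x - y) z = cinner x z - cinner y z"
  by (metis cinner_add_left cinner_minus_left diff_conv_add_uminus)

lemma cinner_diff_right: "cinner x (y - z) = cinner x y - cinner x z"
  by (metis cinner_add_right cinner_minus_right diff_conv_add_uminus)

lemma cinner_self: "cinner x x = complex_of_real ((norm x)^2)"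
  using cinner_self_real_nonneg[of x] norm_eq_sqrt_cinner[of x]
  by (simp add: complex_eq_iff)

lemma norm_sq: "(norm x)^2 = Re (cinner x x)"
  by (simp add: cinner_self)

lemma cinner_ext: assumes "\<And>z. cinner z u = cinner z v" shows "u = v"
proof -
  have "cinner (u - v) (u - v) = 0" by (simp add: cinner_diff_right assms)
  then have "u - v = 0" using cinner_self_eq_zero by blast
  then show ?thesis by simp
qed

lemma norm_add_sq: "(norm (x + y))^2 = (norm x)^2 + (norm y)^2 + 2 * Re (cinner x y)"
proof -
  have "Re (cinner y x) = Re (cinner x y)" by (subst cinner_commute) simp
  then show ?thesis
    by (simp add: norm_sq cinner_add_left cinner_add_right)
qed

lemma norm_diff_sq: "(norm (x - y))^2 = (norm x)^2 + (norm y)^2 - 2 * Re (cinner x y)"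
proof -
  have "Re (cinner y x) = Re (cinner x y)" by (subst cinner_commute) simp
  then show ?thesis
    by (simp add: norm_sq cinner_diff_left cinner_diff_right)
qed

lemma cinner_combo:
  "cinner (scaleC \<alpha> u + scaleC \<beta> v) (scaleC \<gamma> s + scaleC \<delta> t) =
    \<alpha> * cnj \<gamma> * cinner u s + \<alpha> * cnj \<delta> * cinner u t + \<beta> * cnj \<gamma> * cinner v s + \<beta> * cnj \<delta> * cinner v t"
  by (simp add: cinner_add_left cinner_add_right cinner_scaleC_left cinner_scaleC_right algebra_simps)

lemma cnj_mult_self: "cnj z * z = complex_of_real ((cmod z)^2)"
  by (simp add: complex_norm_square[symmetric] mult.commute)

lemma bessel: assumes "norm w = 1" shows "(cmod (cinner q w))^2 \<le> (norm q)^2"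
proof -
  let ?r = "q - scaleC (cinner q w) w"
  have ww: "cinner w w = 1" using assms cinner_self[of w] by simp
  have "cinner ?r ?r = cinner q q - cnj (cinner q w) * cinner q w"
    by (simp add: cinner_diff_left cinner_diff_right cinner_scaleC_left cinner_scaleC_right ww
        algebra_simps cinner_commute[of w q])
  then have "Re (cinner ?r ?r) = (norm q)^2 - (cmod (cinner q w))^2"
    by (simp add: norm_sq[symmetric] cnj_mult_self)
  moreover have "Re (cinner ?r ?r) \<ge> 0" using cinner_self_real_nonneg by blast
  ultimately show ?thesis by simp
qed

lemma cauchy_schwarz: "cmod (cinner u v) \<le> norm u * norm v"
proof (cases "v = 0")
  case True then show ?thesis by simp
next
  case False
  define w where "w = scaleC (complex_of_real (1 / norm v)) v"
  have nw: "norm w = 1" using False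
    unfolding w_def scaleC_of_real by simp
  have "cinner u v = complex_of_real (norm v) * cinner u w"
    using False by (simp add: w_def cinner_scaleC_right)
  then have "cmod (cinner u v) = norm v * cmod (cinner u w)" by (simp add: norm_mult)
  moreover have "cmod (cinner u w) \<le> norm u"
    using bessel[OF nw, of u] by (simp add: power_mono_iff)
  ultimately show ?thesis by (simp add: mult_left_mono mult.commute[of "norm u"])
qed

locale opctx =
  fixes A B :: "'a::complex_inner \<Rightarrow> 'a"
  assumes lin: "bounded_clinear_op A" and adj: "is_adjoint A B"
begin

lemma A_add: "A (x + y) = A x + A y" using lin by (simp add: bounded_clinear_op_def)
lemma A_scaleC: "A (scaleC c x) = scaleC c (A x)" using lin by (simp add: bounded_clinear_op_def)
lemma A_bound: "\<exists>K. \<forall>x. norm (A x) \<le> K * norm x" using lin by (simp add: bounded_clinear_op_def)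
lemma adjE: "cinner (A x) y = cinner x (B y)" using adj by (simp add: is_adjoint_def)

lemma B_add: "B (x + y) = B x + B y"
  by (rule cinner_ext) (simp add: adjE[symmetric] cinner_add_right)
lemma B_scaleC: "B (scaleC c x) = scaleC c (B x)"
  by (rule cinner_ext) (simp add: adjE[symmetric] cinner_scaleC_right)

lemma A_zero: "A 0 = 0" using A_add[of 0 0] by simp
lemma B_zero: "B 0 = 0" using B_add[of 0 0] by simp
lemma A_minus: "A (- x) = - A x" using A_scaleC[of "-1" x] by (simp add: scaleC_minus1)
lemma B_minus: "B (- x) = - B x" using B_scaleC[of "-1" x] by (simp add: scaleC_minus1)
lemma A_diff: "A (x - y) = A x - A y" using A_add[of x "- y"] A_minus[of y] by simp
lemma B_diff: "B (x - y) = B x - B y" using B_add[of x "- y"] B_minus[of y] by simp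
lemma A_scaleR: "A (scaleR r x) = scaleR r (A x)" using A_scaleC[of "of_real r" x] by (simp add: scaleC_of_real)
lemma B_scaleR: "B (scaleR r x) = scaleR r (B x)" using B_scaleC[of "of_real r" x] by (simp add: scaleC_of_real)

definition Q where "Q z = (norm (A z))^2 - (norm (B z))^2"
definition C where "C x = B (A x) - A (B x)"

lemma cinner_C: "cinner (C x) y = cinner (A x) (A y) - cinner (B x) (B y)"
proof -
  have "cinner (B (A x)) y = cinner (A x) (A y)"
    using adjE[of y "A x"] cinner_commute[of y "B (A x)"] cinner_commute[of "A y" "A x"] by simp
  then show ?thesis by (simp add: C_def cinner_diff_left adjE[of "B x"])
qed

lemma polar: "Q (x + y) - Q (x - y) = 4 * Re (cinner (C x) y)"
  by (simp add: Q_def cinner_C A_add A_diff B_add B_diff norm_add_sq norm_diff_sq)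

lemma Q_scaleR: "Q (scaleR r z) = r^2 * Q z"
  by (simp add: Q_def A_scaleR B_scaleR power_mult_distrib algebra_simps)

lemma normbound:
  assumes M: "M \<ge> 0" and QB: "\<And>z. \<bar>Q z\<bar> \<le> M * (norm z)^2"
  shows "norm (C x) \<le> M * norm x"
proof (cases "C x = 0 \<or> x = 0")
  case True
  then show ?thesis using M by (auto simp: C_def A_zero B_zero)
next
  case False
  define n where "n = norm (C x)"
  define m where "m = norm x"
  have n: "n > 0" and m: "m > 0" using False by (auto simp: n_def m_def)
  define t where "t = m / n"
  define y where "y = scaleR t (C x)"
  have cy: "cinner (C x) y = complex_of_real (t * n^2)"
    by (simp add: y_def scaleC_of_real[symmetric] cinner_scaleC_right cinner_self n_def)
  have ny: "norm y = m" using n m by (simp add: y_def t_def n_def)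
  have tn: "t * n^2 = m * n" using n by (simp add: t_def power2_eq_square)
  have par: "(norm (x+y))^2 + (norm (x - y))^2 = 4 * m^2"
    unfolding norm_add_sq norm_diff_sq ny m_def by simp
  have "4 * (m * n) = Q (x + y) - Q (x - y)" by (simp add: polar cy tn)
  also have "\<dots> \<le> M * (norm (x+y))^2 + M * (norm (x - y))^2"
    using QB[of "x+y"] QB[of "x - y"] by linarith
  also have "\<dots> = M * (4 * m^2)"
    using par by (simp add: distrib_left[symmetric])
  finally have "m * n \<le> m * (M * m)" by (simp add: power2_eq_square mult.assoc mult.left_commute)
  then have "n \<le> M * m" using m by simp
  then show ?thesis by (simp add: n_def m_def)
qed

end

definition det2 :: "complex \<Rightarrow> complex \<Rightarrow> real" where "det2 p q = Re p * Im q - Im p * Re q"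

lemma det2_identity:
  "of_real (det2 v w) * u + of_real (det2 w u) * v + of_real (det2 u v) * w = 0"
  unfolding complex_eq_iff det2_def by (simp add: algebra_simps)

lemma three_dep:
  fixes u v w :: complex
  shows "\<exists>r s t::real. (r \<noteq> 0 \<or> s \<noteq> 0 \<or> t \<noteq> 0) \<and> of_real r * u + of_real s * v + of_real t * w = 0"
proof (cases "det2 v w \<noteq> 0 \<or> det2 w u \<noteq> 0 \<or> det2 u v \<noteq> 0")
  case True
  show ?thesis
    apply (rule exI[of _ "det2 v w"], rule exI[of _ "det2 w u"], rule exI[of _ "det2 u v"])
    using True det2_identity[of v w u] by simp
next
  case False
  then have d: "Re u * Im v = Im u * Re v" by (simp add: det2_def)
  show ?thesis
  proof (cases "u = 0")
    case True
    show ?thesis apply (rule exI[of _ 1], rule exI[of _ 0], rule exI[of _ 0]) using True by simp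
  next
    case u: False
    have nz: "(Re u)^2 + (Im u)^2 \<noteq> 0" using u by (simp add: complex_eq_iff)
    have eq: "of_real (Re v * Re u + Im v * Im u) * u + of_real (- ((Re u)^2 + (Im u)^2)) * v + of_real 0 * w = 0"
    proof -
      have e1: "(Re v * Re u + Im v * Im u) * Re u - ((Re u)^2 + (Im u)^2) * Re v = Im u * (Re u * Im v - Im u * Re v)"
        by (simp add: algebra_simps power2_eq_square)
      have e2: "(Re v * Re u + Im v * Im u) * Im u - ((Re u)^2 + (Im u)^2) * Im v = - (Re u * (Re u * Im v - Im u * Re v))"
        by (simp add: algebra_simps power2_eq_square)
      have z: "Re u * Im v - Im u * Re v = 0" using d by simp
      have "(Re v * Re u + Im v * Im u) * Re u - ((Re u)^2 + (Im u)^2) * Re v = 0"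
           "(Re v * Re u + Im v * Im u) * Im u - ((Re u)^2 + (Im u)^2) * Im v = 0"
        using e1 e2 z by simp_all
      moreover have "Re (of_real (Re v * Re u + Im v * Im u) * u + of_real (- ((Re u)^2 + (Im u)^2)) * v + of_real 0 * w)
          = (Re v * Re u + Im v * Im u) * Re u - ((Re u)^2 + (Im u)^2) * Re v"
        "Im (of_real (Re v * Re u + Im v * Im u) * u + of_real (- ((Re u)^2 + (Im u)^2)) * v + of_real 0 * w)
          = (Re v * Re u + Im v * Im u) * Im u - ((Re u)^2 + (Im u)^2) * Im v"
        by (simp_all add: left_diff_distrib distrib_right)
      ultimately show ?thesis unfolding complex_eq_iff by simp
    qed
    show ?thesis
      apply (rule exI[of _ "Re v * Re u + Im v * Im u"], rule exI[of _ "- ((Re u)^2 + (Im u)^2)"], rule exI[of _ 0])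
      apply (rule conjI)
       apply (rule disjI2, rule disjI1) using nz apply linarith
      by (rule eq)
  qed
qed

context opctx begin

lemma exact_point:
  assumes x: "norm x = 1" and w: "norm w = 1" and xw: "cinner x w = 0"
    and tau: "\<tau> \<ge> 0" and zeta: "(cmod \<zeta>)^2 = \<tau> * (1 - \<tau>)"
  shows "cinner (A w) w + of_real \<tau> * (cinner (A x) x - cinner (A w) w)
           + cinner (A x) w * \<zeta> + cinner (A w) x * cnj \<zeta> \<in> numerical_range A"
proof -
  have wx: "cinner w x = 0" using xw cinner_commute[of x w] by simp
  have xx: "cinner x x = 1" using x by (simp add: cinner_self)
  have ww: "cinner w w = 1" using w by (simp add: cinner_self)
  obtain \<alpha> \<beta> :: complex where aa: "\<alpha> * cnj \<alpha> = of_real \<tau>" and ab: "\<alpha> * cnj \<beta> = \<zeta>"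
    and ba: "\<beta> * cnj \<alpha> = cnj \<zeta>" and bb: "\<beta> * cnj \<beta> = of_real (1 - \<tau>)"
  proof (cases "\<tau> = 0")
    case True
    then have "\<zeta> = 0" using zeta by simp
    then show ?thesis using True by (intro that[of 0 1]) simp_all
  next
    case False
    then have tp: "\<tau> > 0" using tau by simp
    define r where "r = sqrt \<tau>"
    have r: "r > 0" "r * r = \<tau>" using tp by (simp_all add: r_def)
    have "cnj \<zeta> * \<zeta> = of_real (r * r * (1 - \<tau>))" using zeta r by (simp add: cnj_mult_self)
    have bb': "cnj \<zeta> / of_real r * cnj (cnj \<zeta> / of_real r) = of_real (1 - \<tau>)"
    proof -
      have "cnj \<zeta> / of_real r * cnj (cnj \<zeta> / of_real r) = cnj \<zeta> * \<zeta> / (of_real (r * r))"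
        by simp
      also have "\<dots> = of_real (r * r * (1 - \<tau>)) / of_real (r * r)" using \<open>cnj \<zeta> * \<zeta> = _\<close> by simp
      also have "\<dots> = of_real (r * r * (1 - \<tau>) / (r * r))" by (simp only: of_real_divide)
      also have "\<dots> = of_real (1 - \<tau>)" using r(1) by simp
      finally show ?thesis .
    qed
    show ?thesis
    proof (rule that[of "of_real r" "cnj \<zeta> / of_real r"])
      show "complex_of_real r * cnj (complex_of_real r) = complex_of_real \<tau>" using r
        by (simp flip: of_real_mult add: r(2))
      show "complex_of_real r * cnj (cnj \<zeta> / complex_of_real r) = \<zeta>" using r by simp
      show "cnj \<zeta> / complex_of_real r * cnj (complex_of_real r) = cnj \<zeta>" using r by simp
    qed (rule bb')
  qed
  define z where "z = scaleC \<alpha> x + scaleC \<beta> w"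
  have Az: "A z = scaleC \<alpha> (A x) + scaleC \<beta> (A w)" by (simp add: z_def A_add A_scaleC)
  have "cinner z z = 1"
    unfolding z_def cinner_combo xx ww xw wx aa bb by simp
  then have nz: "norm z = 1" by (simp add: norm_eq_sqrt_cinner)
  have "cinner (A z) z = cinner (A w) w + of_real \<tau> * (cinner (A x) x - cinner (A w) w)
           + cinner (A x) w * \<zeta> + cinner (A w) x * cnj \<zeta>"
  proof -
    have "cinner (A z) z = cinner (scaleC \<alpha> (A x) + scaleC \<beta> (A w)) (scaleC \<alpha> x + scaleC \<beta> w)"
      by (subst Az) (simp only: z_def)
    also have "\<dots> = of_real \<tau> * cinner (A x) x + \<zeta> * cinner (A x) w + cnj \<zeta> * cinner (A w) x
         + of_real (1 - \<tau>) * cinner (A w) w"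
      by (simp only: cinner_combo aa ab ba bb)
    also have "\<dots> = cinner (A w) w + of_real \<tau> * (cinner (A x) x - cinner (A w) w)
           + cinner (A x) w * \<zeta> + cinner (A w) x * cnj \<zeta>"
      by (simp add: algebra_simps)
    finally show ?thesis .
  qed
  then show ?thesis unfolding numerical_range_def using nz by (intro CollectI exI[of _ z]) simp
qed

end

lemma g_expand:
  fixes \<tau> \<sigma> r s t p q :: real
  shows "(\<tau> + \<sigma> * r) * (1 - (\<tau> + \<sigma> * r)) - ((p + \<sigma> * s)^2 + (q + \<sigma> * t)^2)
     = (\<tau> * (1 - \<tau>) - (p^2 + q^2)) + \<sigma> * (r * (1 - 2 * \<tau>) - 2 * (p * s + q * t)) - \<sigma>^2 * (r^2 + s^2 + t^2)"
  by (simp add: algebra_simps power2_eq_square)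

lemma eventually_neg:
  fixes g0 L e :: real
  assumes e: "e > 0"
  shows "\<exists>S\<ge>0. g0 + S * L - S^2 * e \<le> 0"
proof -
  define S where "S = max 1 ((\<bar>g0\<bar> + \<bar>L\<bar>) / e)"
  have S1: "S \<ge> 1" by (simp add: S_def)
  have S2: "S * e \<ge> \<bar>g0\<bar> + \<bar>L\<bar>" using e by (simp add: S_def pos_divide_le_eq max_def)
  have "g0 + S * L \<le> S * \<bar>g0\<bar> + S * \<bar>L\<bar>"
  proof -
    have "1 * \<bar>g0\<bar> \<le> S * \<bar>g0\<bar>" using S1 by (intro mult_right_mono) simp_all
    then have "g0 \<le> S * \<bar>g0\<bar>" by linarith
    moreover have "S * L \<le> S * \<bar>L\<bar>" using S1 by (simp add: mult_left_mono)
    ultimately show ?thesis by linarith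
  qed
  also have "\<dots> = S * (\<bar>g0\<bar> + \<bar>L\<bar>)" by (simp add: algebra_simps)
  also have "\<dots> \<le> S * (S * e)" using S1 S2 by (simp add: mult_left_mono)
  also have "\<dots> = S^2 * e" by (simp add: power2_eq_square)
  finally have "g0 + S * L - S^2 * e \<le> 0" by simp
  then show ?thesis apply - apply (rule exI[of _ S]) using S1 by simp
qed

context opctx begin

lemma fill:
  assumes x: "norm x = 1" and w: "norm w = 1" and xw: "cinner x w = 0"
    and le: "(cmod \<zeta>)^2 \<le> \<tau> * (1 - \<tau>)"
  shows "cinner (A w) w + of_real \<tau> * (cinner (A x) x - cinner (A w) w)
           + cinner (A x) w * \<zeta> + cinner (A w) x * cnj \<zeta> \<in> numerical_range A"
proof -
  define a where "a = cinner (A x) x"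
  define d where "d = cinner (A w) w"
  define c where "c = cinner (A x) w"
  define b where "b = cinner (A w) x"
  obtain r s t :: real where nz: "r \<noteq> 0 \<or> s \<noteq> 0 \<or> t \<noteq> 0"
    and ker0: "of_real r * (a - d) + of_real s * (c + b) + of_real t * (\<i> * c - \<i> * b) = 0"
    using three_dep[of "a - d" "c + b" "\<i> * c - \<i> * b"] by blast
  define k where "k = Complex s t"
  have ck: "c * k + b * cnj k = of_real s * (c + b) + of_real t * (\<i> * c - \<i> * b)"
    by (simp add: k_def Complex_eq algebra_simps)
  have ker: "of_real r * (a - d) + c * k + b * cnj k = 0" using ker0 ck by (simp add: add.assoc)
  define e where "e = r^2 + s^2 + t^2"
  have e: "e > 0" using nz by (auto simp: e_def add_pos_nonneg add_nonneg_pos)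
  define g where "g \<sigma> = (\<tau> + \<sigma> * r) * (1 - (\<tau> + \<sigma> * r)) - ((Re \<zeta> + \<sigma> * s)^2 + (Im \<zeta> + \<sigma> * t)^2)" for \<sigma>
  define g0 where "g0 = \<tau> * (1 - \<tau>) - ((Re \<zeta>)^2 + (Im \<zeta>)^2)"
  define L where "L = r * (1 - 2 * \<tau>) - 2 * (Re \<zeta> * s + Im \<zeta> * t)"
  have gexp: "g \<sigma> = g0 + \<sigma> * L - \<sigma>^2 * e" for \<sigma>
    unfolding g_def g0_def L_def e_def by (rule g_expand)
  have g0: "g 0 \<ge> 0" using le by (simp add: g_def cmod_power2)
  obtain S where S0: "S \<ge> 0" and S1: "g0 + S * L - S^2 * e \<le> 0" using eventually_neg[OF e, of g0 L] by blast
  have S: "S \<ge> 0" "g S \<le> 0" using S0 S1 by (simp_all add: gexp)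
  have cont: "continuous_on {0..S} g" unfolding g_def by (intro continuous_intros)
  from IVT2'[of g S 0 0, OF S(2) g0 S(1) cont] obtain \<sigma> where gs: "g \<sigma> = 0" by blast
  define \<tau>' where "\<tau>' = \<tau> + \<sigma> * r"
  define \<zeta>' where "\<zeta>' = \<zeta> + of_real \<sigma> * k"
  have Re': "Re \<zeta>' = Re \<zeta> + \<sigma> * s" and Im': "Im \<zeta>' = Im \<zeta> + \<sigma> * t" by (simp_all add: \<zeta>'_def k_def)
  have eq: "(cmod \<zeta>')^2 = \<tau>' * (1 - \<tau>')"
    using gs unfolding g_def cmod_power2 Re' Im' \<tau>'_def by simp
  have tpos: "\<tau>' \<ge> 0"
  proof (rule ccontr)
    assume "\<not> \<tau>' \<ge> 0"
    then have "\<tau>' * (1 - \<tau>') < 0" by (simp add: mult_neg_pos)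
    moreover have "(cmod \<zeta>')^2 \<ge> 0" by simp
    ultimately show False using eq by linarith
  qed
  have mem: "d + of_real \<tau>' * (a - d) + c * \<zeta>' + b * cnj \<zeta>' \<in> numerical_range A"
    using exact_point[OF x w xw tpos eq] by (simp add: a_def b_def c_def d_def)
  have "d + of_real \<tau>' * (a - d) + c * \<zeta>' + b * cnj \<zeta>'
      = (d + of_real \<tau> * (a - d) + c * \<zeta> + b * cnj \<zeta>) + of_real \<sigma> * (of_real r * (a - d) + c * k + b * cnj k)"
    by (simp add: \<tau>'_def \<zeta>'_def algebra_simps)
  also have "\<dots> = d + of_real \<tau> * (a - d) + c * \<zeta> + b * cnj \<zeta>" by (simp add: ker)
  finally have E: "d + of_real \<tau>' * (a - d) + c * \<zeta>' + b * cnj \<zeta>' = d + of_real \<tau> * (a - d) + c * \<zeta> + b * cnj \<zeta>" .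
  have "d + of_real \<tau> * (a - d) + c * \<zeta> + b * cnj \<zeta> \<in> numerical_range A" using mem[unfolded E] .
  then show ?thesis unfolding a_def b_def c_def d_def .
qed

end

context opctx begin

lemma W_bounded: "bounded (numerical_range A)"
proof -
  obtain K where K: "\<And>x. norm (A x) \<le> K * norm x" using A_bound by blast
  have "cmod z \<le> K" if "z \<in> numerical_range A" for z
  proof -
    from that obtain x where z: "z = cinner (A x) x" and x: "norm x = 1"
      unfolding numerical_range_def by blast
    have "cmod z \<le> norm (A x) * norm x" using z cauchy_schwarz by simp
    also have "\<dots> \<le> K" using K[of x] x by simp
    finally show ?thesis .
  qed
  then show ?thesis unfolding bounded_iff by blast
qed

lemma W_convex: "convex (numerical_range A)"
  unfolding convex_alt
proof (intro ballI allI impI)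
  fix p1 p2 and u :: real
  assume p1: "p1 \<in> numerical_range A" and p2: "p2 \<in> numerical_range A" and u: "0 \<le> u \<and> u \<le> 1"
  from p1 obtain x where p1x: "p1 = cinner (A x) x" and x: "norm x = 1"
    unfolding numerical_range_def by blast
  from p2 obtain y where p2y: "p2 = cinner (A y) y" and y: "norm y = 1"
    unfolding numerical_range_def by blast
  have xx: "cinner x x = 1" using x by (simp add: cinner_self)
  have yy: "cinner y y = 1" using y by (simp add: cinner_self)
  define lam where "lam = cinner y x"
  define r where "r = y - scaleC lam x"
  have rx: "cinner r x = 0" by (simp add: r_def cinner_diff_left cinner_scaleC_left xx lam_def)
  show "(1 - u) *\<^sub>R p1 + u *\<^sub>R p2 \<in> numerical_range A"
  proof (cases "r = 0")
    case True
    then have yl: "y = scaleC lam x" by (simp add: r_def)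
    have "1 = cinner y y" using yy by simp
    also have "\<dots> = lam * cnj lam" by (simp add: yl cinner_scaleC_left cinner_scaleC_right xx)
    finally have ll: "lam * cnj lam = 1" by simp
    have "p2 = lam * cnj lam * p1"
      by (simp add: p2y p1x yl A_scaleC cinner_scaleC_left cinner_scaleC_right)
    then have "p2 = p1" using ll by simp
    then have "(1 - u) *\<^sub>R p1 + u *\<^sub>R p2 = p1" by (simp add: algebra_simps)
    then show ?thesis using p1 by simp
  next
    case False
    define \<rho> where "\<rho> = norm r"
    have \<rho>: "\<rho> > 0" using False by (simp add: \<rho>_def)
    define w where "w = scaleC (of_real (1 / \<rho>)) r"
    have nw: "norm w = 1" using \<rho> unfolding w_def scaleC_of_real \<rho>_def by simp
    have wx: "cinner w x = 0" by (simp add: w_def cinner_scaleC_left rx)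
    have xw: "cinner x w = 0" using wx cinner_commute[of w x] by simp
    have yexp: "y = scaleC lam x + scaleC (of_real \<rho>) w"
      using \<rho> by (simp add: w_def scaleC_scaleC r_def scaleC_one)
    have ww: "cinner w w = 1" using nw by (simp add: cinner_self)
    define a where "a = cinner (A x) x"
    define d where "d = cinner (A w) w"
    define c where "c = cinner (A x) w"
    define b where "b = cinner (A w) x"
    have "cinner y y = lam * cnj lam + of_real \<rho> * of_real \<rho>"
      unfolding yexp cinner_combo xx ww xw wx by simp
    then have norm1: "lam * cnj lam + of_real (\<rho>^2) = 1" using yy by (simp add: power2_eq_square)
    define t2 where "t2 = (cmod lam)^2"
    have lt2: "lam * cnj lam = of_real t2" unfolding t2_def cnj_mult_self[symmetric] by (rule mult.commute)
    have t2: "t2 + \<rho>^2 = 1"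
    proof -
      have "complex_of_real (t2 + \<rho>^2) = 1" using norm1 unfolding lt2 by simp
      then show ?thesis by (metis of_real_eq_1_iff)
    qed
    have Ay: "A y = scaleC lam (A x) + scaleC (of_real \<rho>) (A w)" by (simp add: yexp A_add A_scaleC)
    have p2e: "p2 = d + of_real t2 * (a - d) + c * (lam * of_real \<rho>) + b * cnj (lam * of_real \<rho>)"
    proof -
      have "p2 = lam * cnj lam * a + lam * of_real \<rho> * c + of_real \<rho> * cnj lam * b + of_real \<rho> * of_real \<rho> * d"
        unfolding p2y Ay apply (subst yexp) unfolding cinner_combo a_def b_def c_def d_def by simp
      also have "lam * cnj lam = of_real t2" by (rule lt2)
      also have "of_real \<rho> * of_real \<rho> = 1 - of_real t2"
        using t2 by (metis add_diff_cancel_left' of_real_1 of_real_diff of_real_mult power2_eq_square)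
      finally show ?thesis by (simp add: algebra_simps)
    qed
    define \<tau> where "\<tau> = (1 - u) + u * t2"
    define \<zeta> where "\<zeta> = of_real u * (lam * of_real \<rho>)"
    have "(cmod \<zeta>)^2 = u^2 * t2 * \<rho>^2"
      by (simp add: \<zeta>_def t2_def norm_mult power_mult_distrib)
    also have "\<dots> \<le> \<tau> * (1 - \<tau>)"
    proof -
      have "1 - \<tau> = u * (1 - t2)" by (simp add: \<tau>_def algebra_simps)
      also have "1 - t2 = \<rho>^2" using t2 by linarith
      finally have "1 - \<tau> = u * \<rho>^2" .
      moreover have "u * t2 \<le> \<tau>" using u t2 by (simp add: \<tau>_def)
      ultimately have "(u * t2) * (u * \<rho>^2) \<le> \<tau> * (1 - \<tau>)"
        using u by (simp add: mult_right_mono)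
      then show ?thesis by (simp add: power2_eq_square algebra_simps)
    qed
    finally have le: "(cmod \<zeta>)^2 \<le> \<tau> * (1 - \<tau>)" .
    have mem: "d + of_real \<tau> * (a - d) + c * \<zeta> + b * cnj \<zeta> \<in> numerical_range A"
      using fill[OF x nw xw le] by (simp add: a_def b_def c_def d_def)
    have "(1 - u) *\<^sub>R p1 + u *\<^sub>R p2 = d + of_real \<tau> * (a - d) + c * \<zeta> + b * cnj \<zeta>"
      unfolding p2e p1x scaleR_conv_of_real \<tau>_def \<zeta>_def by (simp add: a_def algebra_simps)
    then show ?thesis using mem by simp
  qed
qed

end

context opctx begin

lemma measure_ge:
  assumes x: "norm x = 1" and w: "norm w = 1" and xw: "cinner x w = 0"
  shows "\<bar>(cmod (cinner (A x) w))^2 - (cmod (cinner (A w) x))^2\<bar> * (1/2) \<le> measure lebesgue (numerical_range A)"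
proof -
  define a where "a = cinner (A x) x"
  define d where "d = cinner (A w) w"
  define c where "c = cinner (A x) w"
  define b where "b = cinner (A w) x"
  define h :: real where "h = sqrt 2 / 4"
  have h0: "h \<ge> 0" by (simp add: h_def)
  have hh: "h^2 = 1/8" by (simp add: h_def power_divide)
  define z0 where "z0 = d + of_real (1/2) * (a - d)"
  define P where "P = (\<lambda>\<eta>. z0 + (c*\<eta> + b*cnj \<eta>)) ` {\<eta>. \<bar>Re \<eta>\<bar> \<le> h \<and> \<bar>Im \<eta>\<bar> \<le> h}"
  have Pc: "compact P" and Pm: "measure lebesgue P = \<bar>(cmod c)^2 - (cmod b)^2\<bar> * (2*h)^2"
    using para_measure[OF h0, of z0 c b] by (simp_all add: P_def)
  have sub: "P \<subseteq> numerical_range A"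
  proof
    fix p assume "p \<in> P"
    then obtain \<eta> where p: "p = z0 + (c*\<eta> + b*cnj \<eta>)" and r: "\<bar>Re \<eta>\<bar> \<le> h" and i: "\<bar>Im \<eta>\<bar> \<le> h"
      unfolding P_def by blast
    have "(Re \<eta>)^2 \<le> h^2" using r h0 by (simp add: abs_le_square_iff[symmetric])
    moreover have "(Im \<eta>)^2 \<le> h^2" using i h0 by (simp add: abs_le_square_iff[symmetric])
    ultimately have "(cmod \<eta>)^2 \<le> (1/2) * (1 - 1/2)" using hh by (simp add: cmod_power2)
    from fill[OF x w xw this] have "d + of_real (1/2) * (a - d) + c * \<eta> + b * cnj \<eta> \<in> numerical_range A"
      by (simp add: a_def b_def c_def d_def)
    then show "p \<in> numerical_range A" by (simp add: p z0_def add.assoc)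
  qed
  have Wm: "numerical_range A \<in> lmeasurable"
    by (rule measurable_convex[OF W_convex W_bounded])
  have "measure lebesgue P \<le> measure lebesgue (numerical_range A)"
  proof (rule measure_mono_fmeasurable[OF sub])
    show "P \<in> sets lebesgue" using lmeasurable_compact[OF Pc] by (simp add: fmeasurable_def)
    show "numerical_range A \<in> fmeasurable lebesgue" using Wm .
  qed
  moreover have hq: "(2*h)^2 = 1/2" using hh by (simp add: power_mult_distrib)
  moreover have "measure lebesgue P = \<bar>(cmod c)^2 - (cmod b)^2\<bar> * (1/2)" using Pm unfolding hq .
  ultimately show ?thesis unfolding c_def b_def by linarith
qed

end

lemma norm_orth_sq:
  fixes x v :: "'a::complex_inner"
  assumes x: "norm x = 1" and vx: "cinner v x = 0"
  shows "(norm (scaleC \<alpha> x + v))^2 = (cmod \<alpha>)^2 + (norm v)^2"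
proof -
  have xx: "cinner x x = 1" using x by (simp add: cinner_self)
  have xv: "cinner x v = 0" using vx cinner_commute[of v x] by simp
  have "cinner (scaleC \<alpha> x) v = 0" by (simp add: cinner_scaleC_left xv)
  moreover have "Re (cinner (scaleC \<alpha> x) (scaleC \<alpha> x)) = (cmod \<alpha>)^2"
  proof -
    have e: "cinner (scaleC \<alpha> x) (scaleC \<alpha> x) = cnj \<alpha> * \<alpha>"
      by (simp add: cinner_scaleC_left cinner_scaleC_right xx mult.commute)
    show ?thesis unfolding e cnj_mult_self by simp
  qed
  ultimately have "cinner (scaleC \<alpha> x) v = 0" "(norm (scaleC \<alpha> x))^2 = (cmod \<alpha>)^2"
    by (simp_all only: norm_sq)
  then show ?thesis by (simp add: norm_add_sq)
qed

lemma unit_scale: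
  fixes p :: "'a::complex_inner"
  assumes "p \<noteq> 0"
  defines "w \<equiv> scaleC (of_real (1 / norm p)) p"
  shows "norm w = 1" "cinner p w = of_real (norm p)" "cinner w p = of_real (norm p)"
proof -
  show "norm w = 1" using assms unfolding w_def scaleC_of_real by simp
  have "cinner p w = of_real (1 / norm p) * of_real ((norm p)^2)"
    by (simp add: w_def cinner_scaleC_right cinner_self)
  also have "\<dots> = of_real (1 / norm p * (norm p)^2)" by (simp only: of_real_mult)
  also have "1 / norm p * (norm p)^2 = norm p" using assms by (simp add: power2_eq_square)
  finally show "cinner p w = of_real (norm p)" .
  then show "cinner w p = of_real (norm p)" using cinner_commute[of w p] by simp
qed

context opctx begin

lemma Q_unit:
  assumes x: "norm x = 1"
  shows "\<bar>Q x\<bar> \<le> 2 * measure lebesgue (numerical_range A)"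
proof -
  define M where "M = measure lebesgue (numerical_range A)"
  have M0: "M \<ge> 0" by (simp add: M_def)
  have xx: "cinner x x = 1" using x by (simp add: cinner_self)
  define a where "a = cinner (A x) x"
  define p where "p = A x - scaleC a x"
  define q where "q = B x - scaleC (cnj a) x"
  have Bxx: "cinner (B x) x = cnj a"
    using adjE[of x x] cinner_commute[of x "B x"] by (simp add: a_def)
  have px: "cinner p x = 0" by (simp add: p_def cinner_diff_left cinner_scaleC_left xx a_def)
  have qx: "cinner q x = 0" by (simp add: q_def cinner_diff_left cinner_scaleC_left xx Bxx)
  have Ax: "A x = scaleC a x + p" by (simp add: p_def)
  have Bx: "B x = scaleC (cnj a) x + q" by (simp add: q_def)
  have nA: "(norm (A x))^2 = (cmod a)^2 + (norm p)^2" unfolding Ax by (rule norm_orth_sq[OF x px])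
  have nB: "(norm (B x))^2 = (cmod a)^2 + (norm q)^2" unfolding Bx using norm_orth_sq[OF x qx] by simp
  have Qx: "Q x = (norm p)^2 - (norm q)^2" by (simp add: Q_def nA nB)
  have cw: "cinner (A x) w = cinner p w" if "cinner x w = 0" for w
    using that by (simp add: Ax cinner_add_left cinner_scaleC_left)
  have bw: "cinner (A w) x = cinner w q" if "cinner x w = 0" for w
  proof -
    have wx: "cinner w x = 0" using that cinner_commute[of x w] by simp
    show ?thesis by (simp add: adjE Bx cinner_add_right cinner_scaleC_right wx)
  qed
  have key: "\<bar>(cmod (cinner p w))^2 - (cmod (cinner w q))^2\<bar> * (1/2) \<le> M"
    if "norm w = 1" "cinner x w = 0" for w
    using measure_ge[OF x that] cw[OF that(2)] bw[OF that(2)] by (simp add: M_def)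
  show ?thesis
  proof (cases "norm q \<le> norm p")
    case True
    show ?thesis
    proof (cases "p = 0")
      case True
      then have "norm q = 0" using \<open>norm q \<le> norm p\<close> by simp
      then show ?thesis using \<open>p = 0\<close> M0 by (simp add: Qx M_def)
    next
      case False
      define w where "w = scaleC (of_real (1 / norm p)) p"
      have nw: "norm w = 1" and pw: "cinner p w = of_real (norm p)" and wp: "cinner w p = of_real (norm p)"
        using unit_scale[OF False] by (simp_all add: w_def)
      have xw: "cinner x w = 0"
      proof -
        have "cinner w x = 0" by (simp add: w_def cinner_scaleC_left px)
        then show ?thesis using cinner_commute[of w x] by simp
      qed
      have b: "(cmod (cinner w q))^2 \<le> (norm q)^2"
        using bessel[OF nw, of q] cinner_commute[of w q] by simp
      have "\<bar>Q x\<bar> \<le> \<bar>(cmod (cinner p w))^2 - (cmod (cinner w q))^2\<bar>"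
        using True b by (simp add: Qx pw power_mono)
      then show ?thesis using key[OF nw xw] by (simp add: M_def)
    qed
  next
    case False
    then have qn: "q \<noteq> 0" by auto
    define w where "w = scaleC (of_real (1 / norm q)) q"
    have nw: "norm w = 1" and qw: "cinner q w = of_real (norm q)" and wq: "cinner w q = of_real (norm q)"
      using unit_scale[OF qn] by (simp_all add: w_def)
    have xw: "cinner x w = 0"
    proof -
      have "cinner w x = 0" by (simp add: w_def cinner_scaleC_left qx)
      then show ?thesis using cinner_commute[of w x] by simp
    qed
    have c: "(cmod (cinner p w))^2 \<le> (norm p)^2" using bessel[OF nw, of p] .
    have "\<bar>Q x\<bar> \<le> \<bar>(cmod (cinner p w))^2 - (cmod (cinner w q))^2\<bar>"
      using False c by (simp add: Qx wq power_mono)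
    then show ?thesis using key[OF nw xw] by (simp add: M_def)
  qed
qed

end

theorem proposition4:
  fixes A Astar :: "'a::complex_hilbert \<Rightarrow> 'a"
  assumes "bounded_clinear_op A"
    and "is_adjoint A Astar"
  shows "onorm (\<lambda>x. Astar (A x) - A (Astar x)) \<le> 2 * measure lebesgue (numerical_range A)"
proof -
  interpret opctx A Astar using assms by (rule opctx.intro)
  define M where "M = 2 * measure lebesgue (numerical_range A)"
  have M0: "M \<ge> 0" by (simp add: M_def)
  have QB: "\<bar>Q z\<bar> \<le> M * (norm z)^2" for z
  proof (cases "z = 0")
    case True
    then show ?thesis by (simp add: Q_def A_zero B_zero)
  next
    case False
    define x where "x = scaleR (1 / norm z) z"
    have x: "norm x = 1" using False by (simp add: x_def)
    have z: "z = scaleR (norm z) x" using False by (simp add: x_def)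
    have "\<bar>Q z\<bar> = (norm z)^2 * \<bar>Q x\<bar>" by (subst z) (simp add: Q_scaleR abs_mult)
    also have "\<dots> \<le> (norm z)^2 * M" using Q_unit[OF x] by (simp add: M_def mult_left_mono)
    finally show ?thesis by (simp add: mult.commute)
  qed
  show ?thesis
    unfolding M_def[symmetric]
  proof (rule onorm_bound[OF M0])
    fix x
    show "norm (Astar (A x) - A (Astar x)) \<le> M * norm x"
      using normbound[OF M0 QB] by (simp add: C_def)
  qed
qed

end
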